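(* If $X$ is a Lindelöf $\Sigma$-space with $nw(X)\leq\mathfrak c$, then $|C(X)|\leq\mathfrak c$ and $w(X)\leq\mathfrak c$.
   Context: All spaces are Tychonoff. $C(X)$ is the set of continuous real-valued functions on $X$; $nw$ is network weight, $w$ weight, $\mathfrak c=2^\omega$. The Nagami number $Nag(X)$ is the minimal cardinality of a family $\mathcal F$ of closed subsets of $\beta X$ such that for every $x\in X$ and $y\in\beta X\setminus X$ there is $F\in\mathcal F$ with $x\in F$, $y\notin F$. $X$ is a Lindelöf $\Sigma$-space if $Nag(X)\leq\omega$. *)

theory Defs
  imports "HOL-Analysis.Analysis" "HOL-Library.Equipollence"
begin

definition tychonoff_space :: "'a topology \<Rightarrow> bool" where
  "tychonoff_space X \<longleftrightarrow> completely_regular_space X \<and> Hausdorff_space X"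

definition network :: "'a topology \<Rightarrow> 'a set set \<Rightarrow> bool" where
  "network X \<N> \<longleftrightarrow> (\<forall>N\<in>\<N>. N \<subseteq> topspace X) \<and>
     (\<forall>U x. openin X U \<and> x \<in> U \<longrightarrow> (\<exists>N\<in>\<N>. x \<in> N \<and> N \<subseteq> U))"

definition nw_le_continuum :: "'a topology \<Rightarrow> bool" where
  "nw_le_continuum X \<longleftrightarrow> (\<exists>\<N>. network X \<N> \<and> \<N> \<lesssim> (UNIV :: real set))"

definition topology_base :: "'a topology \<Rightarrow> 'a set set \<Rightarrow> bool" where
  "topology_base X \<B> \<longleftrightarrow> (\<forall>B\<in>\<B>. openin X B) \<and> openin X = arbitrary union_of (\<lambda>U. U \<in> \<B>)"

definition weight_le_continuum :: "'a topology \<Rightarrow> bool" where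
  "weight_le_continuum X \<longleftrightarrow> (\<exists>\<B>. topology_base X \<B> \<and> \<B> \<lesssim> (UNIV :: real set))"

definition Cfun :: "'a topology \<Rightarrow> ('a \<Rightarrow> real) set" where
  "Cfun X = (\<lambda>f. restrict f (topspace X)) ` {f. continuous_map X euclideanreal f}"

definition stone_cech :: "'a topology \<Rightarrow> 'b topology \<Rightarrow> ('a \<Rightarrow> 'b) \<Rightarrow> bool" where
  "stone_cech X K e \<longleftrightarrow> compact_space K \<and> Hausdorff_space K \<and> embedding_map X K e \<and>
     K closure_of (e ` topspace X) = topspace K \<and>
     (\<forall>f. continuous_map X (top_of_set {0..1::real}) f \<longrightarrow>
        (\<exists>g. continuous_map K (top_of_set {0..1::real}) g \<and> (\<forall>x\<in>topspace X. g (e x) = f x)))"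

text \<open>Nag(X) \<le> \<omega>: a countable family of closed subsets of \<beta>X separating points of X from
  points of \<beta>X \ X. \<beta>X is realised (as in its standard construction) inside the cube
  [0,1]^{C*(X)}, hence on the type ('a \<Rightarrow> real) \<Rightarrow> real; it is unique up to a
  homeomorphism fixing X, so the existential choice of (K,e) is harmless.\<close>
definition lindelof_sigma :: "'a topology \<Rightarrow> bool" where
  "lindelof_sigma X \<longleftrightarrow>
     (\<exists>(K :: (('a \<Rightarrow> real) \<Rightarrow> real) topology) e. stone_cech X K e \<and>
       (\<exists>\<F>. countable \<F> \<and> (\<forall>F\<in>\<F>. closedin K F) \<and>
          (\<forall>x\<in>topspace X. \<forall>y\<in>topspace K - e ` topspace X.
             \<exists>F\<in>\<F>. e x \<in> F \<and> y \<notin> F)))"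

end

theory Submission
  imports Defs "HOL-Library.Countable_Set"
begin


definition encF :: "('i::countable \<Rightarrow> nat set) \<Rightarrow> nat set" where
  "encF F = {prod_encode (to_nat k, j) | k j. j \<in> F k}"

lemma encF_inj: "inj encF"
proof (rule injI)
  fix F G :: "'i::countable \<Rightarrow> nat set" assume eq: "encF F = encF G"
  show "F = G"
  proof (rule ext, rule set_eqI)
    fix k j
    have "j \<in> F k \<longleftrightarrow> prod_encode (to_nat k, j) \<in> encF F"
      unfolding encF_def by (auto dest!: inj_onD[OF inj_prod_encode, simplified] simp: )
    moreover have "j \<in> G k \<longleftrightarrow> prod_encode (to_nat k, j) \<in> encF G"
      unfolding encF_def by (auto dest!: inj_onD[OF inj_prod_encode, simplified])
    ultimately show "j \<in> F k \<longleftrightarrow> j \<in> G k" using eq by simp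
  qed
qed

lemma encF_eq: "encF (F::'i::countable \<Rightarrow> nat set) = encF G \<Longrightarrow> F = G"
  using encF_inj by (rule injD)

lemma Suc_insert0_eq: "insert 0 (Suc ` a) = insert 0 (Suc ` b) \<Longrightarrow> a = b"
proof -
  assume h: "insert 0 (Suc ` a) = insert 0 (Suc ` b)"
  have "Suc ` a = insert 0 (Suc ` a) - {0}" "Suc ` b = insert 0 (Suc ` b) - {0}" by auto
  hence "Suc ` a = Suc ` b" using h by simp
  thus "a = b" by (simp add: inj_image_eq_iff)
qed

abbreviation U :: "nat set set" where "U \<equiv> UNIV"

lemma lepoll_U_iff: "A \<lesssim> (UNIV::real set) \<longleftrightarrow> A \<lesssim> U"
  by (meson eqpoll_sym lepoll_trans2 nat_sets_eqpoll_reals)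

lemma lepoll_UE: assumes "A \<lesssim> U" obtains g :: "'a \<Rightarrow> nat set" where "inj_on g A"
  using assms unfolding lepoll_def by blast

lemma inj_U: "inj_on (h :: 'a \<Rightarrow> nat set) A \<Longrightarrow> A \<lesssim> U"
  unfolding lepoll_def by blast

lemma times_U: assumes "A \<lesssim> U" "B \<lesssim> U" shows "A \<times> B \<lesssim> U"
proof -
  obtain ga :: "_ \<Rightarrow> nat set" where ga: "inj_on ga A" using assms(1) by (rule lepoll_UE)
  obtain gb :: "_ \<Rightarrow> nat set" where gb: "inj_on gb B" using assms(2) by (rule lepoll_UE)
  let ?h = "\<lambda>(a,b). encF (\<lambda>i::nat. if i = 0 then ga a else gb b)"
  have "inj_on ?h (A \<times> B)"
  proof (rule inj_onI)
    fix p q assume m: "p \<in> A \<times> B" "q \<in> A \<times> B" and e: "?h p = ?h q"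
    obtain a b a' b' where pq: "p = (a,b)" "q = (a',b')" by fastforce
    have "(\<lambda>i::nat. if i = 0 then ga a else gb b) = (\<lambda>i::nat. if i = 0 then ga a' else gb b')"
      using e pq by (auto intro: encF_eq)
    from fun_cong[OF this, of 0] fun_cong[OF this, of 1]
    show "p = q" using m pq inj_onD[OF ga] inj_onD[OF gb] by auto
  qed
  thus ?thesis by (rule inj_U)
qed

lemma lists_U: assumes "A \<lesssim> U" shows "lists A \<lesssim> U"
proof -
  obtain g :: "_ \<Rightarrow> nat set" where g: "inj_on g A" using assms by (rule lepoll_UE)
  let ?h = "\<lambda>xs. encF (\<lambda>i::nat. if i = 0 then {length xs::nat} else if i - 1 < length xs then g (xs!(i-1)) else {})"
  have "inj_on ?h (lists A)"
  proof (rule inj_onI)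
    fix xs ys assume m: "xs \<in> lists A" "ys \<in> lists A" and e: "?h xs = ?h ys"
    have E: "(\<lambda>i::nat. if i = 0 then {length xs::nat} else if i - 1 < length xs then g (xs!(i-1)) else {})
       = (\<lambda>i::nat. if i = 0 then {length ys} else if i - 1 < length ys then g (ys!(i-1)) else {})"
      using e by (rule encF_eq)
    from fun_cong[OF E, of 0] have L: "length xs = length ys" by simp
    show "xs = ys"
    proof (rule nth_equalityI[OF L])
      fix i assume i: "i < length xs"
      from fun_cong[OF E, of "Suc i"] have "g (xs!i) = g (ys!i)" using i L by simp
      moreover have "xs!i \<in> A" "ys!i \<in> A" using m i L by (auto simp: lists_eq_set)
      ultimately show "xs!i = ys!i" using inj_onD[OF g] by blast
    qed
  qed
  thus ?thesis by (rule inj_U)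
qed

lemma option_U: assumes "A \<lesssim> U" shows "insert None (Some ` A) \<lesssim> U"
proof -
  obtain g :: "_ \<Rightarrow> nat set" where g: "inj_on g A" using assms by (rule lepoll_UE)
  let ?h = "\<lambda>x. case x of None \<Rightarrow> {} | Some a \<Rightarrow> insert 0 (Suc ` g a)"
  have "inj_on ?h (insert None (Some ` A))"
    using g by (auto simp: inj_on_def dest!: Suc_insert0_eq)
  thus ?thesis by (rule inj_U)
qed

lemma funs_U: fixes A :: "'b set" assumes "A \<lesssim> U" shows "{c :: 'i::countable \<Rightarrow> 'b. \<forall>k. c k \<in> A} \<lesssim> U"
proof -
  obtain g :: "_ \<Rightarrow> nat set" where g: "inj_on g A" using assms by (rule lepoll_UE)
  let ?h = "\<lambda>c. encF (\<lambda>k. g (c k))"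
  have "inj_on ?h {c :: 'i::countable \<Rightarrow> 'b. \<forall>k. c k \<in> A}"
  proof (rule inj_onI)
    fix c d :: "'i::countable \<Rightarrow> 'b" assume m: "c \<in> {c. \<forall>k. c k \<in> A}" "d \<in> {c. \<forall>k. c k \<in> A}" and e: "?h c = ?h d"
    have "(\<lambda>k. g (c k)) = (\<lambda>k. g (d k))" using e by (rule encF_eq)
    show "c = d"
    proof (rule ext)
      fix k show "c k = d k" using fun_cong[OF \<open>(\<lambda>k. g (c k)) = (\<lambda>k. g (d k))\<close>, of k] m inj_onD[OF g] by auto
    qed
  qed
  thus ?thesis by (rule inj_U)
qed



definition Wo :: "'k topology \<Rightarrow> ('d \<Rightarrow> 'k \<Rightarrow> real) \<Rightarrow> 'd list \<Rightarrow> 'k set" where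
  "Wo K h s = {w \<in> topspace K. \<forall>d\<in>set s. h d w < 1/2}"
definition Wc :: "'k topology \<Rightarrow> ('d \<Rightarrow> 'k \<Rightarrow> real) \<Rightarrow> 'd list \<Rightarrow> 'k set" where
  "Wc K h s = {w \<in> topspace K. \<forall>d\<in>set s. h d w \<le> 1/2}"

lemma Wo_sub_Wc: "Wo K h s \<subseteq> Wc K h s"
  by (auto simp: Wo_def Wc_def)

lemma openin_Wo:
  assumes "\<And>d. d \<in> set s \<Longrightarrow> continuous_map K euclideanreal (h d)"
  shows "openin K (Wo K h s)"
  using assms
proof (induction s)
  case Nil then show ?case by (simp add: Wo_def)
next
  case (Cons d s)
  have "Wo K h (d#s) = Wo K h s \<inter> {w \<in> topspace K. h d w \<in> {..<1/2}}"
    by (auto simp: Wo_def)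
  moreover have "openin K {w \<in> topspace K. h d w \<in> {..<1/2}}"
    by (rule openin_continuous_map_preimage[OF Cons.prems]) auto
  ultimately show ?case using Cons by auto
qed

lemma closedin_Wc:
  assumes "\<And>d. d \<in> set s \<Longrightarrow> continuous_map K euclideanreal (h d)"
  shows "closedin K (Wc K h s)"
  using assms
proof (induction s)
  case Nil then show ?case by (simp add: Wc_def)
next
  case (Cons d s)
  have "Wc K h (d#s) = Wc K h s \<inter> {w \<in> topspace K. h d w \<in> {..1/2}}"
    by (auto simp: Wc_def)
  moreover have "closedin K {w \<in> topspace K. h d w \<in> {..1/2}}"
    by (rule closedin_continuous_map_preimage[OF Cons.prems]) auto
  ultimately show ?case using Cons by auto
qed

lemma cell:
  assumes cK: "compact_space K" and P: "closedin K P" "P \<subseteq> e ` topspace X"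
    and g: "continuous_map K euclideanreal g" and eps: "\<epsilon> > 0" and z: "z \<in> P"
    and sep: "\<And>x y. x \<in> topspace X \<Longrightarrow> y \<in> topspace X \<Longrightarrow> x \<noteq> y \<Longrightarrow>
                 \<exists>d\<in>D. h d (e x) < 1/3 \<and> h d (e y) > 2/3"
    and hc: "\<And>d. d \<in> D \<Longrightarrow> continuous_map K euclideanreal (h d)"
  shows "\<exists>s\<in>lists D. z \<in> Wo K h s \<and> (\<forall>w\<in>P. w \<in> Wc K h s \<longrightarrow> \<bar>g w - g z\<bar> < \<epsilon>)"
proof -
  define Q where "Q = P \<inter> {w \<in> topspace K. \<bar>g w - g z\<bar> \<in> {\<epsilon>..}}"
  have "closedin K {w \<in> topspace K. \<bar>g w - g z\<bar> \<in> {\<epsilon>..}}"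
    by (rule closedin_continuous_map_preimage) (auto intro!: continuous_intros g)
  hence "closedin K Q" unfolding Q_def using P by auto
  hence cQ: "compactin K Q" using cK closedin_compact_space by blast
  define Dz where "Dz = {d \<in> D. h d z < 1/3}"
  define Op where "Op d = {w \<in> topspace K. h d w \<in> {1/2<..}}" for d
  have Oo: "openin K (Op d)" if "d \<in> Dz" for d
    unfolding Op_def using that by (intro openin_continuous_map_preimage[OF hc]) (auto simp: Dz_def)
  have zK: "z \<in> topspace K" using P z closedin_subset by blast
  have "Q \<subseteq> \<Union>(Op ` Dz)"
  proof
    fix q assume q: "q \<in> Q"
    hence qP: "q \<in> P" and qK: "q \<in> topspace K" and qe: "\<bar>g q - g z\<bar> \<ge> \<epsilon>" by (auto simp: Q_def)
    obtain a where a: "a \<in> topspace X" "z = e a" using P z by blast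
    obtain b where b: "b \<in> topspace X" "q = e b" using P qP by blast
    have "a \<noteq> b" using a b qe eps by auto
    then obtain d where "d \<in> D" "h d (e a) < 1/3" "h d (e b) > 2/3" using sep a b by blast
    thus "q \<in> \<Union>(Op ` Dz)" using a b qK by (auto simp: Op_def Dz_def intro!: bexI[of _ d])
  qed
  then obtain \<F> where F: "finite \<F>" "\<F> \<subseteq> Op ` Dz" "Q \<subseteq> \<Union>\<F>"
    using cQ Oo unfolding compactin_def by (metis (no_types, lifting) imageE)
  then obtain C where C: "C \<subseteq> Dz" "finite C" "\<F> = Op ` C" by (meson finite_subset_image)
  obtain s where s: "set s = C" using C finite_list by blast
  show ?thesis
  proof (intro bexI conjI ballI impI)
    show "s \<in> lists D" using s C by (auto simp: Dz_def)
    show "z \<in> Wo K h s" using s C zK by (auto simp: Wo_def Dz_def)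
    fix w assume w: "w \<in> P" "w \<in> Wc K h s"
    show "\<bar>g w - g z\<bar> < \<epsilon>"
    proof (rule ccontr)
      assume "\<not> \<bar>g w - g z\<bar> < \<epsilon>"
      hence "w \<in> Q" using w by (auto simp: Q_def Wc_def)
      then obtain d where "d \<in> C" "w \<in> Op d" using F C by auto
      thus False using w s by (auto simp: Op_def Wc_def)
    qed
  qed
qed

definition good :: "'k topology \<Rightarrow> ('a \<Rightarrow> 'k) \<Rightarrow> 'a topology \<Rightarrow> ('d \<Rightarrow> 'k \<Rightarrow> real) \<Rightarrow> real
   \<Rightarrow> ('k \<Rightarrow> real) \<Rightarrow> 'k set list \<Rightarrow> ('d list \<times> real) list \<Rightarrow> bool" where
  "good K e X h \<epsilon> g T l \<longleftrightarrow> (\<forall>x\<in>topspace X. (\<forall>F\<in>set T. e x \<in> F) \<longrightarrow>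
      ((\<exists>(s,r)\<in>set l. e x \<in> Wo K h s) \<and> (\<forall>(s,r)\<in>set l. e x \<in> Wc K h s \<longrightarrow> \<bar>g (e x) - r\<bar> < \<epsilon>)))"

lemma closedin_Inter_top: "(\<And>F. F \<in> S \<Longrightarrow> closedin K F) \<Longrightarrow> closedin K (topspace K \<inter> \<Inter>S)"
  by (cases "S = {}") (auto intro!: closedin_Inter simp: Int_absorb1 Inter_lower closedin_subset le_infI2)

lemma keylemma:
  assumes cK: "compact_space K" and eX: "e ` topspace X \<subseteq> topspace K"
    and Fc: "\<And>F. F \<in> Fam \<Longrightarrow> closedin K F"
    and Fsep: "\<forall>x\<in>topspace X. \<forall>y\<in>topspace K - e ` topspace X. \<exists>F\<in>Fam. e x \<in> F \<and> y \<notin> F"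
    and g: "continuous_map K euclideanreal g" and eps: "\<epsilon> > 0" and x: "x \<in> topspace X"
    and sep: "\<And>x y. x \<in> topspace X \<Longrightarrow> y \<in> topspace X \<Longrightarrow> x \<noteq> y \<Longrightarrow>
                 \<exists>d\<in>D. h d (e x) < 1/3 \<and> h d (e y) > 2/3"
    and hc: "\<And>d. d \<in> D \<Longrightarrow> continuous_map K euclideanreal (h d)"
  shows "\<exists>T\<in>lists Fam. (\<forall>F\<in>set T. e x \<in> F) \<and> (\<exists>l\<in>lists (lists D \<times> (UNIV::real set)). good K e X h \<epsilon> g T l)"
proof -
  define S where "S = {F \<in> Fam. e x \<in> F}"
  define P where "P = topspace K \<inter> \<Inter>S"
  have Pc: "closedin K P" unfolding P_def S_def by (rule closedin_Inter_top) (auto intro: Fc)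
  have PX: "P \<subseteq> e ` topspace X"
  proof
    fix w assume w: "w \<in> P"
    show "w \<in> e ` topspace X"
    proof (rule ccontr)
      assume wn: "w \<notin> e ` topspace X"
      have "w \<in> topspace K" using w by (simp add: P_def)
      then obtain F where "F \<in> Fam" "e x \<in> F" "w \<notin> F" using Fsep x wn by blast
      thus False using w by (auto simp: P_def S_def)
    qed
  qed
  have "\<forall>z\<in>P. \<exists>s\<in>lists D. z \<in> Wo K h s \<and> (\<forall>w\<in>P. w \<in> Wc K h s \<longrightarrow> \<bar>g w - g z\<bar> < \<epsilon>)"
    using cell[OF cK Pc PX g eps _ sep hc] by blast
  then obtain sf where sf: "\<And>z. z \<in> P \<Longrightarrow> sf z \<in> lists D \<and> z \<in> Wo K h (sf z) \<and>
       (\<forall>w\<in>P. w \<in> Wc K h (sf z) \<longrightarrow> \<bar>g w - g z\<bar> < \<epsilon>)" by metis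
  have hcs: "\<And>d. d \<in> set (sf z) \<Longrightarrow> continuous_map K euclideanreal (h d)" if "z \<in> P" for z
    using sf[OF that] hc by auto
  have cP: "compactin K P" using cK Pc closedin_compact_space by blast
  have "P \<subseteq> \<Union>((\<lambda>z. Wo K h (sf z)) ` P)" using sf by blast
  moreover have "\<forall>U\<in>(\<lambda>z. Wo K h (sf z)) ` P. openin K U"
  proof
    fix U assume "U \<in> (\<lambda>z. Wo K h (sf z)) ` P"
    then obtain z where z: "z \<in> P" "U = Wo K h (sf z)" by blast
    show "openin K U" unfolding z(2) by (rule openin_Wo[OF hcs[OF z(1)]])
  qed
  ultimately obtain \<F> where F: "finite \<F>" "\<F> \<subseteq> (\<lambda>z. Wo K h (sf z)) ` P" "P \<subseteq> \<Union>\<F>"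
    using cP unfolding compactin_def by meson
  then obtain Z where Z: "Z \<subseteq> P" "finite Z" "\<F> = (\<lambda>z. Wo K h (sf z)) ` Z" by (meson finite_subset_image)
  obtain zs where zs: "set zs = Z" using Z finite_list by blast
  define l where "l = map (\<lambda>z. (sf z, g z)) zs"
  define L where "L = (topspace K - (\<Union>z\<in>Z. Wo K h (sf z))) \<union>
       (\<Union>z\<in>Z. Wc K h (sf z) \<inter> {w \<in> topspace K. \<bar>g w - g z\<bar> \<in> {\<epsilon>..}})"
  have Lc: "closedin K L"
    unfolding L_def
  proof (intro closedin_Un closedin_diff closedin_topspace openin_Union closedin_Union)
    show "finite ((\<lambda>z. Wc K h (sf z) \<inter> {w \<in> topspace K. \<bar>g w - g z\<bar> \<in> {\<epsilon>..}}) ` Z)" using Z by auto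
    show "openin K U" if U: "U \<in> (\<lambda>z. Wo K h (sf z)) ` Z" for U
    proof -
      obtain z where z: "z \<in> P" "U = Wo K h (sf z)" using U Z by blast
      show "openin K U" unfolding z(2) by (rule openin_Wo[OF hcs[OF z(1)]])
    qed
    show "closedin K T" if T: "T \<in> (\<lambda>z. Wc K h (sf z) \<inter> {w \<in> topspace K. \<bar>g w - g z\<bar> \<in> {\<epsilon>..}}) ` Z" for T
    proof -
      obtain z where z: "z \<in> Z" "T = Wc K h (sf z) \<inter> {w \<in> topspace K. \<bar>g w - g z\<bar> \<in> {\<epsilon>..}}"
        using T by blast
      have "closedin K {w \<in> topspace K. \<bar>g w - g z\<bar> \<in> {\<epsilon>..}}"
        by (rule closedin_continuous_map_preimage) (auto intro!: continuous_intros g)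
      moreover have "closedin K (Wc K h (sf z))" using z Z by (intro closedin_Wc[OF hcs]) auto
      ultimately show ?thesis using z by auto
    qed
  qed
  have LP: "\<forall>w\<in>L. w \<notin> P"
  proof
    fix w assume w: "w \<in> L"
    show "w \<notin> P"
    proof
      assume wP: "w \<in> P"
      from w consider "w \<notin> (\<Union>z\<in>Z. Wo K h (sf z))"
        | z where "z \<in> Z" "w \<in> Wc K h (sf z)" "\<bar>g w - g z\<bar> \<ge> \<epsilon>" unfolding L_def by auto
      thus False
      proof cases
        case 1 thus False using wP F Z by auto
      next
        case 2
        hence zP: "z \<in> P" using Z by auto
        have "\<bar>g w - g z\<bar> < \<epsilon>" using sf[OF zP] wP 2 by blast
        with 2 show False by linarith
      qed
    qed
  qed
  have cL: "compactin K L" using cK Lc closedin_compact_space by blast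
  have "L \<subseteq> \<Union>((\<lambda>F. topspace K - F) ` S)"
  proof
    fix w assume w: "w \<in> L"
    hence "w \<in> topspace K" using Lc closedin_subset by blast
    moreover then obtain F where "F \<in> S" "w \<notin> F" using LP w by (auto simp: P_def)
    ultimately show "w \<in> \<Union>((\<lambda>F. topspace K - F) ` S)" by blast
  qed
  moreover have "\<forall>U\<in>(\<lambda>F. topspace K - F) ` S. openin K U" using Fc by (auto simp: S_def)
  ultimately obtain \<G> where G: "finite \<G>" "\<G> \<subseteq> (\<lambda>F. topspace K - F) ` S" "L \<subseteq> \<Union>\<G>"
    using cL unfolding compactin_def by meson
  then obtain T' where T': "T' \<subseteq> S" "finite T'" "\<G> = (\<lambda>F. topspace K - F) ` T'" by (meson finite_subset_image)
  obtain T where T: "set T = T'" using T' finite_list by blast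
  show ?thesis
  proof (intro bexI conjI ballI)
    show "T \<in> lists Fam" using T T' by (auto simp: S_def)
    show "e x \<in> F" if "F \<in> set T" for F using that T T' by (auto simp: S_def)
    have "sf z \<in> lists D" if "z \<in> set zs" for z using sf[of z] Z zs that by blast
    thus "l \<in> lists (lists D \<times> UNIV)" by (fastforce simp: l_def in_lists_conv_set)
    show "good K e X h \<epsilon> g T l"
      unfolding good_def
    proof (rule ballI, rule impI)
      fix x' assume x': "x' \<in> topspace X" "\<forall>F\<in>set T. e x' \<in> F"
      have ex'K: "e x' \<in> topspace K" using x' eX by auto
      have nL: "e x' \<notin> L" using x' G T T' by auto
      then obtain z where z: "z \<in> Z" "e x' \<in> Wo K h (sf z)" using ex'K unfolding L_def by blast
      have A: "\<exists>(s,r)\<in>set l. e x' \<in> Wo K h s" using z zs by (auto simp: l_def)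
      have B: "\<forall>(s,r)\<in>set l. e x' \<in> Wc K h s \<longrightarrow> \<bar>g (e x') - r\<bar> < \<epsilon>"
        using nL ex'K zs unfolding l_def L_def by auto
      show "(\<exists>(s,r)\<in>set l. e x' \<in> Wo K h s) \<and> (\<forall>(s,r)\<in>set l. e x' \<in> Wc K h s \<longrightarrow> \<bar>g (e x') - r\<bar> < \<epsilon>)"
        using A B by blast
    qed
  qed
qed



lemma top01_real: "continuous_map K (top_of_set {0..1::real}) g \<Longrightarrow> continuous_map K euclideanreal g"
  by (simp add: continuous_map_in_subtopology)

lemma sep_family:
  assumes cr: "completely_regular_space X" and t1: "t1_space X" and sc: "stone_cech X K e"
    and nw: "network X N"
  shows "\<exists>D h. D \<subseteq> N \<times> N \<and> (\<forall>d\<in>D. continuous_map K euclideanreal (h d)) \<and>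
     (\<forall>x\<in>topspace X. \<forall>y\<in>topspace X. x \<noteq> y \<longrightarrow> (\<exists>d\<in>D. h d (e x) < 1/3 \<and> h d (e y) > 2/3))"
proof -
  define D where "D = {(A,B). A \<in> N \<and> B \<in> N \<and> (\<exists>u. continuous_map X (top_of_set {0..1::real}) u \<and>
     (\<forall>a\<in>A. u a < 1/3) \<and> (\<forall>b\<in>B. u b > 2/3))}"
  have "\<forall>d\<in>D. \<exists>g. continuous_map K (top_of_set {0..1::real}) g \<and> (\<forall>a\<in>fst d. g (e a) < 1/3) \<and> (\<forall>b\<in>snd d. g (e b) > 2/3)"
  proof
    fix d assume d: "d \<in> D"
    obtain A B u where AB: "d = (A,B)" "A \<in> N" "B \<in> N" and u: "continuous_map X (top_of_set {0..1::real}) u"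
      "\<forall>a\<in>A. u a < 1/3" "\<forall>b\<in>B. u b > 2/3" using d unfolding D_def by blast
    obtain g where g: "continuous_map K (top_of_set {0..1::real}) g" "\<forall>x\<in>topspace X. g (e x) = u x"
      using sc u(1) unfolding stone_cech_def by blast
    have NX: "\<forall>M\<in>N. M \<subseteq> topspace X" using nw unfolding network_def by (rule conjunct1)
    have AX: "A \<subseteq> topspace X" "B \<subseteq> topspace X" using NX AB by blast+
    have "\<forall>a\<in>A. g (e a) < 1/3" using AX(1) g(2) u(2) by auto
    moreover have "\<forall>b\<in>B. g (e b) > 2/3" using AX(2) g(2) u(3) by auto
    ultimately show "\<exists>g. continuous_map K (top_of_set {0..1::real}) g \<and> (\<forall>a\<in>fst d. g (e a) < 1/3) \<and> (\<forall>b\<in>snd d. g (e b) > 2/3)"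
      using g(1) AB(1) by auto
  qed
  from bchoice[OF this] obtain h where h0: "\<forall>d\<in>D. continuous_map K (top_of_set {0..1::real}) (h d) \<and>
     (\<forall>a\<in>fst d. h d (e a) < 1/3) \<and> (\<forall>b\<in>snd d. h d (e b) > 2/3)" by blast
  have h: "\<And>d. d \<in> D \<Longrightarrow> continuous_map K (top_of_set {0..1::real}) (h d) \<and>
     (\<forall>a\<in>fst d. h d (e a) < 1/3) \<and> (\<forall>b\<in>snd d. h d (e b) > 2/3)" using h0 by blast
  have sepx: "\<forall>x\<in>topspace X. \<forall>y\<in>topspace X. x \<noteq> y \<longrightarrow> (\<exists>d\<in>D. h d (e x) < 1/3 \<and> h d (e y) > 2/3)"
  proof (intro ballI impI)
    fix x y assume x: "x \<in> topspace X" and y: "y \<in> topspace X" and xy: "x \<noteq> y"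
    have c1: "closedin X {y}" by (rule closedin_t1_singleton[OF t1 y])
    have c2: "x \<in> topspace X - {y}" using x xy by auto
    have "\<exists>f::'a\<Rightarrow>real. continuous_map X (top_of_set {0..1}) f \<and> f x = 0 \<and> (f ` {y} \<subseteq> {1})"
      by (rule cr[unfolded completely_regular_space_def, rule_format, OF conjI[OF c1 c2]])
    then obtain u where u: "continuous_map X (top_of_set {0..1::real}) u" "u x = 0" "u ` {y} \<subseteq> {1}"
      by blast
    have ue: "continuous_map X euclideanreal u" using u(1) top01_real by blast
    have nwp: "\<And>U z. openin X U \<Longrightarrow> z \<in> U \<Longrightarrow> \<exists>M\<in>N. z \<in> M \<and> M \<subseteq> U"
      using nw unfolding network_def by (meson conjunct2)
    have o1: "openin X {z \<in> topspace X. u z \<in> {..<1/3}}" by (rule openin_continuous_map_preimage[OF ue]) auto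
    have m1: "x \<in> {z \<in> topspace X. u z \<in> {..<1/3}}" using x u by auto
    obtain A where A: "A \<in> N" "x \<in> A" "A \<subseteq> {z \<in> topspace X. u z \<in> {..<1/3}}"
      using nwp[OF o1 m1] by blast
    have o2: "openin X {z \<in> topspace X. u z \<in> {2/3<..}}" by (rule openin_continuous_map_preimage[OF ue]) auto
    have m2: "y \<in> {z \<in> topspace X. u z \<in> {2/3<..}}" using y u by auto
    obtain B where B: "B \<in> N" "y \<in> B" "B \<subseteq> {z \<in> topspace X. u z \<in> {2/3<..}}"
      using nwp[OF o2 m2] by blast
    have "\<forall>a\<in>A. u a < 1/3" "\<forall>b\<in>B. u b > 2/3" using A(3) B(3) by auto
    hence dD: "(A,B) \<in> D" unfolding D_def using A(1) B(1) u(1) by blast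
    have "h (A,B) (e x) < 1/3" "h (A,B) (e y) > 2/3" using h[OF dD] A(2) B(2) by auto
    thus "\<exists>d\<in>D. h d (e x) < 1/3 \<and> h d (e y) > 2/3" using dD by blast
  qed
  have "D \<subseteq> N \<times> N" unfolding D_def by blast
  moreover have "\<forall>d\<in>D. continuous_map K euclideanreal (h d)"
  proof
    fix d assume "d \<in> D" thus "continuous_map K euclideanreal (h d)" by (rule top01_real[OF conjunct1[OF h]])
  qed
  ultimately show ?thesis using sepx by (intro exI[of _ D] exI[of _ h]) simp
qed




definition sig :: "real \<Rightarrow> real" where "sig t = 1/2 + arctan t / pi"

lemma sig_range: "sig t \<in> {0..1}"
  using arctan_bounded[of t] pi_gt_zero unfolding sig_def
  by (auto simp: field_simps)

lemma sig_inj: "sig a = sig b \<Longrightarrow> a = b"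
  unfolding sig_def using pi_gt_zero by (auto simp: arctan_eq_iff)

lemma sig_cont: "continuous_map X euclideanreal f \<Longrightarrow> continuous_map X (top_of_set {0..1}) (\<lambda>x. sig (f x))"
proof -
  assume f: "continuous_map X euclideanreal f"
  have "continuous_map X euclideanreal (\<lambda>x. sig (f x))"
  proof -
    have "continuous_on UNIV sig" unfolding sig_def by (intro continuous_intros) auto
    hence "continuous_map euclideanreal euclideanreal sig" by simp
    from continuous_map_compose[OF f this] show ?thesis by (simp add: o_def)
  qed
  thus ?thesis using sig_range by (simp add: continuous_map_in_subtopology)
qed

lemma small_zero: "(\<And>n::nat. \<bar>a::real\<bar> < 2 / Suc n) \<Longrightarrow> a = 0"
proof (rule ccontr)
  assume h: "\<And>n::nat. \<bar>a\<bar> < 2 / Suc n" and a: "a \<noteq> 0"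
  obtain n :: nat where n: "2 / \<bar>a\<bar> < n" using reals_Archimedean2 by blast
  have "\<bar>a\<bar> < 2 / Suc n" by (rule h)
  hence "\<bar>a\<bar> * Suc n < 2" by (simp add: field_simps)
  moreover have "2 < \<bar>a\<bar> * n" using n a by (simp add: field_simps)
  moreover have "\<bar>a\<bar> * n \<le> \<bar>a\<bar> * Suc n" by (simp add: mult_left_mono)
  ultimately show False by linarith
qed



lemma Cfun_cont:
  assumes "r \<in> Cfun X" shows "continuous_map X euclideanreal r" and "\<And>x. x \<notin> topspace X \<Longrightarrow> r x = undefined"
proof -
  obtain f where f: "continuous_map X euclideanreal f" "r = restrict f (topspace X)"
    using assms unfolding Cfun_def by blast
  show "continuous_map X euclideanreal r" using continuous_map_eq[OF f(1)] f(2) by simp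
  show "\<And>x. x \<notin> topspace X \<Longrightarrow> r x = undefined" using f(2) by simp
qed

theorem corollary1:
  fixes X :: "'a topology"
  assumes "tychonoff_space X"
    and "lindelof_sigma X"
    and "nw_le_continuum X"
  shows "Cfun X \<lesssim> (UNIV :: real set) \<and> weight_le_continuum X"
proof -
  have cr: "completely_regular_space X" and hX: "Hausdorff_space X"
    using assms(1) unfolding tychonoff_space_def by blast+
  have t1: "t1_space X" by (rule Hausdorff_imp_t1_space[OF hX])
  have "\<exists>(K :: (('a \<Rightarrow> real) \<Rightarrow> real) topology) e. stone_cech X K e \<and>
       (\<exists>\<F>. countable \<F> \<and> (\<forall>F\<in>\<F>. closedin K F) \<and>
          (\<forall>x\<in>topspace X. \<forall>y\<in>topspace K - e ` topspace X. \<exists>F\<in>\<F>. e x \<in> F \<and> y \<notin> F))"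
    using assms(2) unfolding lindelof_sigma_def .
  then obtain K :: "(('a \<Rightarrow> real) \<Rightarrow> real) topology" and e where ke: "stone_cech X K e \<and>
       (\<exists>\<F>. countable \<F> \<and> (\<forall>F\<in>\<F>. closedin K F) \<and>
          (\<forall>x\<in>topspace X. \<forall>y\<in>topspace K - e ` topspace X. \<exists>F\<in>\<F>. e x \<in> F \<and> y \<notin> F))"
    by (elim exE) (rule that, assumption)
  have sc: "stone_cech X K e" using ke by (rule conjunct1)
  obtain Fam where Fam: "countable Fam \<and> (\<forall>F\<in>Fam. closedin K F) \<and>
          (\<forall>x\<in>topspace X. \<forall>y\<in>topspace K - e ` topspace X. \<exists>F\<in>Fam. e x \<in> F \<and> y \<notin> F)"
    using conjunct2[OF ke] by (elim exE) (rule that, assumption)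
  have Fcount: "countable Fam" and Fc: "\<forall>F\<in>Fam. closedin K F"
    and Fsep: "\<forall>x\<in>topspace X. \<forall>y\<in>topspace K - e ` topspace X. \<exists>F\<in>Fam. e x \<in> F \<and> y \<notin> F"
    using Fam by simp_all
  obtain N where nw: "network X N" and Nc: "N \<lesssim> (UNIV::real set)"
    using assms(3) unfolding nw_le_continuum_def by (elim exE conjE) (rule that; assumption)
  obtain D h where DN: "D \<subseteq> N \<times> N" and hc: "\<forall>d\<in>D. continuous_map K euclideanreal (h d)"
    and sep: "\<forall>x\<in>topspace X. \<forall>y\<in>topspace X. x \<noteq> y \<longrightarrow> (\<exists>d\<in>D. h d (e x) < 1/3 \<and> h d (e y) > 2/3)"
    using sep_family[OF cr t1 sc nw] by (elim exE conjE) (rule that; assumption)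
  have cK: "compact_space K" using sc unfolding stone_cech_def by (elim conjE)
  have emb: "embedding_map X K e" using sc unfolding stone_cech_def by (elim conjE)
  have "continuous_map X K e"
    using homeomorphic_imp_continuous_map[OF emb[unfolded embedding_map_def]]
    by (simp add: continuous_map_in_subtopology)
  hence eX: "e ` topspace X \<subseteq> topspace K" by (rule continuous_map_image_subset_topspace)
  have extp: "\<forall>f. continuous_map X (top_of_set {0..1::real}) f \<longrightarrow>
        (\<exists>g. continuous_map K (top_of_set {0..1::real}) g \<and> (\<forall>x\<in>topspace X. g (e x) = f x))"
    using sc unfolding stone_cech_def by (elim conjE)
  have Fc': "\<And>F. F \<in> Fam \<Longrightarrow> closedin K F" using Fc by blast
  have sep': "\<And>x y. x \<in> topspace X \<Longrightarrow> y \<in> topspace X \<Longrightarrow> x \<noteq> y \<Longrightarrow>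
                 \<exists>d\<in>D. h d (e x) < 1/3 \<and> h d (e y) > 2/3" using sep by blast
  have hc': "\<And>d. d \<in> D \<Longrightarrow> continuous_map K euclideanreal (h d)" using hc by blast
  define G where "G r = (SOME g. continuous_map K (top_of_set {0..1::real}) g \<and> (\<forall>x\<in>topspace X. g (e x) = sig (r x)))" for r
  have G: "continuous_map K euclideanreal (G r) \<and> (\<forall>x\<in>topspace X. G r (e x) = sig (r x))"
    if r: "r \<in> Cfun X" for r
  proof -
    have "continuous_map X (top_of_set {0..1}) (\<lambda>x. sig (r x))" by (rule sig_cont[OF Cfun_cont(1)[OF r]])
    hence "\<exists>g. continuous_map K (top_of_set {0..1::real}) g \<and> (\<forall>x\<in>topspace X. g (e x) = sig (r x))"
      by (rule extp[rule_format])
    hence "continuous_map K (top_of_set {0..1::real}) (G r) \<and> (\<forall>x\<in>topspace X. G r (e x) = sig (r x))"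
      unfolding G_def by (rule someI_ex)
    thus ?thesis using top01_real by blast
  qed
  define Lsp where "Lsp = lists (lists D \<times> (UNIV::real set))"
  define cd where "cd r n i = (if \<exists>l\<in>Lsp. good K e X h (1/Suc n) (G r) (from_nat_into (lists Fam) i) l
      then Some (SOME l. l \<in> Lsp \<and> good K e X h (1/Suc n) (G r) (from_nat_into (lists Fam) i) l) else None)"
    for r n i
  define code where "code r = (\<lambda>k::nat\<times>nat. cd r (fst k) (snd k))" for r
  have cdgood: "l \<in> Lsp \<and> good K e X h (1/Suc n) (G r) (from_nat_into (lists Fam) i) l"
    if "cd r n i = Some l" for r n i l
  proof -
    have ex: "\<exists>l\<in>Lsp. good K e X h (1/Suc n) (G r) (from_nat_into (lists Fam) i) l"
      using that unfolding cd_def by (metis option.distinct(1))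
    hence "l = (SOME l. l \<in> Lsp \<and> good K e X h (1/Suc n) (G r) (from_nat_into (lists Fam) i) l)"
      using that unfolding cd_def by simp
    thus ?thesis using someI_ex[of "\<lambda>l. l \<in> Lsp \<and> good K e X h (1/Suc n) (G r) (from_nat_into (lists Fam) i) l"] ex
      by blast
  qed
  have LF: "lists Fam \<noteq> {}" "countable (lists Fam)" using Fcount by auto
  have inj: "inj_on code (Cfun X)"
  proof (rule inj_onI)
    fix r1 r2 assume r1: "r1 \<in> Cfun X" and r2: "r2 \<in> Cfun X" and eq: "code r1 = code r2"
    show "r1 = r2"
    proof (rule ext)
      fix x
      show "r1 x = r2 x"
      proof (cases "x \<in> topspace X")
        case False thus ?thesis using Cfun_cont(2)[OF r1] Cfun_cont(2)[OF r2] by simp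
      next
        case x: True
        have "\<bar>sig (r1 x) - sig (r2 x)\<bar> < 2 / Suc n" for n
        proof -
          have eps: "(1 / Suc n :: real) > 0" by simp
          have kl: "\<exists>T\<in>lists Fam. (\<forall>F\<in>set T. e x \<in> F) \<and> (\<exists>l\<in>lists (lists D \<times> (UNIV::real set)). good K e X h (1/Suc n) (G r1) T l)"
            by (rule keylemma[OF cK eX Fc' Fsep conjunct1[OF G[OF r1]] eps x sep' hc'])
          then obtain T where T1: "T \<in> lists Fam" and TP: "(\<forall>F\<in>set T. e x \<in> F) \<and>
             (\<exists>l\<in>lists (lists D \<times> (UNIV::real set)). good K e X h (1/Suc n) (G r1) T l)"
            by (rule bexE)
          have T: "T \<in> lists Fam" "\<forall>F\<in>set T. e x \<in> F" using T1 TP by simp_all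
          have "\<exists>l\<in>lists (lists D \<times> (UNIV::real set)). good K e X h (1/Suc n) (G r1) T l" using TP by simp
          hence ex: "\<exists>l\<in>Lsp. good K e X h (1/Suc n) (G r1) T l" unfolding Lsp_def by blast
          obtain i where i: "from_nat_into (lists Fam) i = T"
            using T(1) range_from_nat_into[OF LF] by (metis rangeE)
          define l where "l = (SOME l. l \<in> Lsp \<and> good K e X h (1/Suc n) (G r1) T l)"
          have c1: "cd r1 n i = Some l" unfolding cd_def l_def i using ex by simp
          have "cd r2 n i = Some l" using c1 eq unfolding code_def by (metis fst_conv snd_conv)
          have g1: "good K e X h (1/Suc n) (G r1) T l" using cdgood[OF c1] i by simp
          have g2: "good K e X h (1/Suc n) (G r2) T l" using cdgood[OF \<open>cd r2 n i = Some l\<close>] i by simp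
          obtain s r where sr: "(s,r) \<in> set l" "e x \<in> Wo K h s" using g1 x T(2) unfolding good_def by blast
          have wc: "e x \<in> Wc K h s" by (rule subsetD[OF Wo_sub_Wc sr(2)])
          have "\<bar>G r1 (e x) - r\<bar> < 1/Suc n" using g1 x T(2) sr wc unfolding good_def by blast
          moreover have "\<bar>G r2 (e x) - r\<bar> < 1/Suc n" using g2 x T(2) sr wc unfolding good_def by blast
          moreover have "G r1 (e x) = sig (r1 x)" "G r2 (e x) = sig (r2 x)" using G[OF r1] G[OF r2] x by auto
          ultimately have "\<bar>sig (r1 x) - sig (r2 x)\<bar> < 1/Suc n + 1/Suc n" by linarith
          thus ?thesis by simp
        qed
        hence "sig (r1 x) - sig (r2 x) = 0" by (rule small_zero)
        thus ?thesis using sig_inj by simp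
      qed
    qed
  qed
  have rng: "code ` Cfun X \<subseteq> {c. \<forall>k. c k \<in> insert None (Some ` Lsp)}"
  proof
    fix c assume "c \<in> code ` Cfun X"
    then obtain r where c: "c = code r" by blast
    have "c k \<in> insert None (Some ` Lsp)" for k
    proof (cases "c k")
      case (Some l)
      hence "cd r (fst k) (snd k) = Some l" unfolding c code_def by simp
      hence "l \<in> Lsp" using cdgood by blast
      thus ?thesis using Some by blast
    qed simp
    thus "c \<in> {c. \<forall>k. c k \<in> insert None (Some ` Lsp)}" by blast
  qed
  have realU: "(UNIV::real set) \<lesssim> U" using lepoll_U_iff by blast
  have NU: "N \<lesssim> U" using Nc lepoll_U_iff by blast
  have DU: "D \<lesssim> U" using lepoll_trans[OF subset_imp_lepoll[OF DN] times_U[OF NU NU]] .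
  have LspU: "Lsp \<lesssim> U" unfolding Lsp_def by (intro lists_U times_U DU realU)
  have "{c :: nat \<times> nat \<Rightarrow> _. \<forall>k. c k \<in> insert None (Some ` Lsp)} \<lesssim> U"
    by (rule funs_U[OF option_U[OF LspU]])
  moreover have "Cfun X \<lesssim> {c :: nat \<times> nat \<Rightarrow> _. \<forall>k. c k \<in> insert None (Some ` Lsp)}"
    unfolding lepoll_def using inj rng by blast
  ultimately have CU: "Cfun X \<lesssim> U" using lepoll_trans by blast
  define Bs where "Bs = (\<lambda>(r,a,b). {x \<in> topspace X. r x \<in> {a<..<b}}) ` (Cfun X \<times> ((\<rat>::real set) \<times> (\<rat>::real set)))"
  have QU: "(\<rat> :: real set) \<lesssim> U"
    using lepoll_trans[OF subset_imp_lepoll realU] by blast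
  have "Bs \<lesssim> Cfun X \<times> ((\<rat>::real set) \<times> (\<rat>::real set))" unfolding Bs_def by (rule image_lepoll)
  hence BsU: "Bs \<lesssim> U" using lepoll_trans times_U[OF CU times_U[OF QU QU]] by blast
  have Bo: "\<forall>V. V \<in> Bs \<longrightarrow> openin X V"
  proof (intro allI impI)
    fix V assume "V \<in> Bs"
    then obtain p where p: "p \<in> Cfun X \<times> ((\<rat>::real set) \<times> (\<rat>::real set))"
        "V = (\<lambda>(r,a,b). {x \<in> topspace X. r x \<in> {a<..<b}}) p" unfolding Bs_def by blast
    obtain r and a b :: real where pr: "p = (r,a,b)" by (cases p) blast
    have r: "r \<in> Cfun X" and V: "V = {x \<in> topspace X. r x \<in> {a<..<b}}" using p pr by auto
    show "openin X V" unfolding V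
      by (rule openin_continuous_map_preimage[OF Cfun_cont(1)[OF r]]) auto
  qed
  have "openin X = arbitrary union_of (\<lambda>U. U \<in> Bs)"
    unfolding openin_topology_base_unique
  proof (intro conjI Bo allI impI)
    fix W x assume Wx: "openin X W \<and> x \<in> W"
    have c1: "closedin X (topspace X - W)" using Wx by blast
    have c2: "x \<in> topspace X - (topspace X - W)" using Wx openin_subset by blast
    have "\<exists>f::'a\<Rightarrow>real. continuous_map X (top_of_set {0..1}) f \<and> f x = 0 \<and> (f ` (topspace X - W) \<subseteq> {1})"
      by (rule cr[unfolded completely_regular_space_def, rule_format, OF conjI[OF c1 c2]])
    then obtain u where u: "continuous_map X (top_of_set {0..1::real}) u" "u x = 0" "u ` (topspace X - W) \<subseteq> {1}"
      by blast
    have ue: "continuous_map X euclideanreal u" using u(1) top01_real by blast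
    define r where "r = restrict u (topspace X)"
    have rC: "r \<in> Cfun X" unfolding Cfun_def r_def using ue by blast
    have q: "(-1::real) \<in> \<rat>" "(1/2::real) \<in> \<rat>" by simp_all
    define V where "V = {y \<in> topspace X. r y \<in> {-1<..<1/2}}"
    have "(r, -1, 1/2) \<in> Cfun X \<times> ((\<rat>::real set) \<times> (\<rat>::real set))" using rC q by blast
    hence "V \<in> Bs" unfolding Bs_def V_def by (rule rev_image_eqI) simp
    moreover have "x \<in> V" unfolding V_def r_def using u(2) c2 by auto
    moreover have "V \<subseteq> W"
    proof
      fix y assume y: "y \<in> V"
      hence yX: "y \<in> topspace X" and uy: "u y < 1/2" unfolding V_def r_def by auto
      show "y \<in> W"
      proof (rule ccontr)
        assume "y \<notin> W"
        hence "u y \<in> {1}" using u(3) yX by blast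
        thus False using uy by simp
      qed
    qed
    ultimately show "\<exists>V. V \<in> Bs \<and> x \<in> V \<and> V \<subseteq> W" by blast
  qed
  hence "topology_base X Bs" unfolding topology_base_def using Bo by blast
  moreover have "Bs \<lesssim> (UNIV::real set)" using BsU lepoll_U_iff by blast
  ultimately have "weight_le_continuum X" unfolding weight_le_continuum_def by blast
  moreover have "Cfun X \<lesssim> (UNIV::real set)" using CU lepoll_U_iff by blast
  ultimately show ?thesis by blast
qed


end
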